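(* Let $z_1,z_2,z_3,z_4\in\mathbb{C}$ be the vertices of a convex quadrilateral, labelled in cyclic order around its boundary, and for $j=1,\dots,4$ (indices mod $4$) let $$\alpha_j=\angle z_{j+1}z_jz_{j+2},\qquad \beta_j=\angle z_{j+2}z_jz_{j-1},\qquad \gamma_j=\angle z_{j-1}z_jz_{j+1}.$$ Then $$S_1=\sum_{j=1}^4(\cos\alpha_j+\cos\beta_j+\cos\gamma_j)\ \ge\ 4 .$$
   Context: Angles $\angle XYZ\in[0,\pi]$ denote the usual unsigned angle at $Y$ between the segments $YX$ and $YZ$. *)

theory Defs
  imports "HOL-Analysis.Analysis"
begin

definition angle :: "complex \<Rightarrow> complex \<Rightarrow> complex \<Rightarrow> real" where
  "angle x y z = arccos (((x - y) \<bullet> (z - y)) / (norm (x - y) * norm (z - y)))"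

(* signed cross product (b - a) x (c - a): positive iff c is strictly left of the
   directed line a -> b *)
definition cross :: "complex \<Rightarrow> complex \<Rightarrow> complex \<Rightarrow> real" where
  "cross a b c = Im (cnj (b - a) * (c - a))"

(* v 0, v 1, v 2, v 3 are the vertices of a (non-degenerate) convex quadrilateral,
   listed in cyclic order around its boundary (either orientation): for every edge
   v j v (j+1), the two remaining vertices lie strictly on the same side of the
   line through that edge, and the side is the same for all edges. *)
definition convex_quad :: "(nat \<Rightarrow> complex) \<Rightarrow> bool" where
  "convex_quad v \<longleftrightarrow>
     (\<forall>j<4. \<forall>k\<in>{2,3}. cross (v j) (v ((j+1) mod 4)) (v ((j+k) mod 4)) > 0) \<or>
     (\<forall>j<4. \<forall>k\<in>{2,3}. cross (v j) (v ((j+1) mod 4)) (v ((j+k) mod 4)) < 0)"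

end

theory Submission
  imports Defs
begin

lemma cos_angle_eq:
  assumes "x \<noteq> y" "z \<noteq> y"
  shows "cos (angle x y z) = ((norm (x-y))^2 + (norm (z-y))^2 - (norm (x-z))^2) / (2 * norm (x-y) * norm (z-y))"
proof -
  define p where "p = norm (x-y) * norm (z-y)"
  define i where "i = (x-y) \<bullet> (z-y)"
  have pos: "p > 0" using assms unfolding p_def by auto
  have cs: "\<bar>i\<bar> \<le> p" unfolding i_def p_def by (rule Cauchy_Schwarz_ineq2)
  have "\<bar>i\<bar> / p \<le> 1" using cs pos by (simp add: pos_divide_le_eq)
  then have "\<bar>i / p\<bar> \<le> 1" using pos by (simp add: abs_divide)
  then have "cos (angle x y z) = i / p"
    unfolding angle_def i_def[symmetric] p_def[symmetric] by (rule cos_arccos_abs)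
  also have "i = ((norm (x-y))^2 + (norm (z-y))^2 - (norm (x-z))^2) / 2"
    unfolding i_def using dot_norm_neg[of "x-y" "z-y"] by simp
  finally show ?thesis unfolding p_def by simp
qed

lemma tri_real:
  fixes a b c :: real
  assumes "a > 0" "b > 0" "c > 0" "a \<le> b + c" "b \<le> a + c" "c \<le> a + b"
  shows "(b^2 + c^2 - a^2) / (2*b*c) + (a^2 + c^2 - b^2) / (2*a*c) + (a^2 + b^2 - c^2) / (2*a*b) \<ge> 1"
proof -
  have "(b^2 + c^2 - a^2) / (2*b*c) + (a^2 + c^2 - b^2) / (2*a*c) + (a^2 + b^2 - c^2) / (2*a*b) - 1
      = (a+b-c)*(b+c-a)*(c+a-b) / (2*a*b*c)"
    using assms by (simp add: field_simps) (simp add: algebra_simps power2_eq_square)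
  moreover have "(a+b-c)*(b+c-a)*(c+a-b) / (2*a*b*c) \<ge> 0"
    using assms by (intro divide_nonneg_pos mult_nonneg_nonneg) auto
  ultimately show ?thesis by linarith
qed


lemma angle_sym: "angle x y z = angle z y x"
  unfolding angle_def by (simp add: inner_commute mult.commute)

lemma tri:
  fixes p q r :: complex
  assumes "p \<noteq> q" "q \<noteq> r" "p \<noteq> r"
  shows "cos (angle q p r) + cos (angle p q r) + cos (angle p r q) \<ge> 1"
proof -
  define a where "a = dist q r"
  define b where "b = dist p r"
  define c where "c = dist p q"
  have n: "norm (q-p) = c" "norm (r-p) = b" "norm (q-r) = a" "norm (p-q) = c" "norm (r-q) = a" "norm (p-r) = b"
    unfolding a_def b_def c_def by (simp_all add: dist_norm norm_minus_commute)
  have pos: "a > 0" "b > 0" "c > 0" using assms unfolding a_def b_def c_def by auto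
  have t: "a \<le> b + c" "b \<le> a + c" "c \<le> a + b" unfolding a_def b_def c_def
    using dist_triangle[of q r p] dist_triangle[of p r q] dist_triangle[of p q r]
    by (simp_all add: dist_commute)
  have e1: "cos (angle q p r) = (c^2 + b^2 - a^2) / (2*c*b)"
    using cos_angle_eq[of q p r] assms unfolding n by simp
  have e2: "cos (angle p q r) = (c^2 + a^2 - b^2) / (2*c*a)"
    using cos_angle_eq[of p q r] assms unfolding n by simp
  have e3: "cos (angle p r q) = (b^2 + a^2 - c^2) / (2*b*a)"
    using cos_angle_eq[of p r q] assms unfolding n by simp
  have f: "(c^2 + b^2 - a^2) / (2*c*b) = (b^2 + c^2 - a^2) / (2*b*c)"
     "(c^2 + a^2 - b^2) / (2*c*a) = (a^2 + c^2 - b^2) / (2*a*c)"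
     "(b^2 + a^2 - c^2) / (2*b*a) = (a^2 + b^2 - c^2) / (2*a*b)"
    by (simp_all add: ac_simps)
  show ?thesis unfolding e1 e2 e3 f using tri_real[OF pos t] .
qed

lemma cross_distinct: "cross a b c \<noteq> 0 \<Longrightarrow> a \<noteq> b \<and> a \<noteq> c \<and> b \<noteq> c"
  by (auto simp: cross_def algebra_simps)

theorem corollary1:
  fixes z1 z2 z3 z4 :: complex
  defines "v \<equiv> (\<lambda>j::nat. [z1, z2, z3, z4] ! (j mod 4))"
  assumes "convex_quad v"
  shows "(\<Sum>j<4. cos (angle (v (j+1)) (v j) (v (j+2)))
                + cos (angle (v (j+2)) (v j) (v (j+3)))
                + cos (angle (v (j+3)) (v j) (v (j+1)))) \<ge> 4"
proof -
  have nz: "cross (v j) (v ((j+1) mod 4)) (v ((j+2) mod 4)) \<noteq> 0" if "j < 4" for j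
  proof -
    have "(\<forall>k\<in>{2::nat,3}. cross (v j) (v ((j+1) mod 4)) (v ((j+k) mod 4)) > 0) \<or>
          (\<forall>k\<in>{2::nat,3}. cross (v j) (v ((j+1) mod 4)) (v ((j+k) mod 4)) < 0)"
      using assms(2) that unfolding convex_quad_def by blast
    then show ?thesis by auto
  qed
  have vv: "v 0 = z1" "v 1 = z2" "v 2 = z3" "v 3 = z4" "v 4 = z1" "v 5 = z2" "v 6 = z3"
    "v (Suc 0) = z2" "v (Suc (Suc 0)) = z3" "v (Suc (Suc (Suc 0))) = z4"
    by (simp_all add: v_def)
  have c0: "cross z1 z2 z3 \<noteq> 0" using nz[of 0] by (simp add: vv)
  have c1: "cross z2 z3 z4 \<noteq> 0" using nz[of 1] by (simp add: vv)
  have c3: "cross z4 z1 z2 \<noteq> 0" using nz[of 3] by (simp add: vv)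
  have d: "z1 \<noteq> z2" "z1 \<noteq> z3" "z2 \<noteq> z3" "z2 \<noteq> z4" "z3 \<noteq> z4" "z1 \<noteq> z4"
    using cross_distinct[OF c0] cross_distinct[OF c1] cross_distinct[OF c3] by auto
  have lessThan4: "{..<4::nat} = {0,1,2,3}" by auto
  have s: "(\<Sum>j<4. cos (angle (v (j+1)) (v j) (v (j+2)))
                + cos (angle (v (j+2)) (v j) (v (j+3)))
                + cos (angle (v (j+3)) (v j) (v (j+1))))
     = cos (angle z2 z1 z3) + cos (angle z3 z1 z4) + cos (angle z4 z1 z2)
     + cos (angle z3 z2 z4) + cos (angle z4 z2 z1) + cos (angle z1 z2 z3)
     + cos (angle z4 z3 z1) + cos (angle z1 z3 z2) + cos (angle z2 z3 z4)
     + cos (angle z1 z4 z2) + cos (angle z2 z4 z3) + cos (angle z3 z4 z1)"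
    unfolding lessThan4 by (simp add: vv)
  have t1: "cos (angle z2 z1 z3) + cos (angle z1 z2 z3) + cos (angle z1 z3 z2) \<ge> 1"
    using tri[of z1 z2 z3] d by auto
  have t2: "cos (angle z2 z1 z4) + cos (angle z1 z2 z4) + cos (angle z1 z4 z2) \<ge> 1"
    using tri[of z1 z2 z4] d by auto
  have t3: "cos (angle z3 z1 z4) + cos (angle z1 z3 z4) + cos (angle z1 z4 z3) \<ge> 1"
    using tri[of z1 z3 z4] d by auto
  have t4: "cos (angle z3 z2 z4) + cos (angle z2 z3 z4) + cos (angle z2 z4 z3) \<ge> 1"
    using tri[of z2 z3 z4] d by auto
  have y: "angle z2 z1 z4 = angle z4 z1 z2" "angle z1 z2 z4 = angle z4 z2 z1"
     "angle z1 z3 z4 = angle z4 z3 z1" "angle z1 z4 z3 = angle z3 z4 z1"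
    by (rule angle_sym)+
  show ?thesis unfolding s using t1 t2 t3 t4 unfolding y by linarith
qed

end
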